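(* Let $E\subset\mathbb{T}$ be a Lebesgue measurable set and $n\ge1$ an integer. Then for every $\alpha\in[-\pi,\pi]$, $$\Lambda_n(E)\ge\frac{1}{2\pi}\int_{-\pi}^{\pi}\chi_E(e^{it})\,F_n(t-\alpha)\,dt,$$ where $F_n(x)=\dfrac{\sin^2(nx/2)}{n\sin^2(x/2)}$ is the Fejér kernel.
   Context: $\mathbb{T}$ is the unit circle and $\chi_E$ the characteristic function of $E$. $H^1$ is the Hardy space on the unit disk with norm $\|F\|_1=\frac{1}{2\pi}\int_{-\pi}^{\pi}|F(e^{it})|\,dt$, and $b(H^1)$ is its closed unit ball. For $n\in\mathbb{Z}$, $$\Lambda_n(E)=\sup_{F\in b(H^1)}\left|\frac{1}{2\pi i}\int_E F(\zeta)\,\overline{\zeta}^{\,n}\,d\zeta\right|.$$ *)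

theory Defs
  imports "HOL-Analysis.Analysis"
begin

definition hardy1 :: "(complex \<Rightarrow> complex) set" where
  "hardy1 = {F. F holomorphic_on ball 0 1 \<and>
     (\<exists>B. \<forall>r\<in>{0..<1::real}.
        (1 / (2*pi)) * (LINT t:{-pi..pi}|lebesgue. cmod (F (complex_of_real r * cis t))) \<le> B)}"

text \<open>Boundary values F(e^{it}): radial limit (exists a.e. for F in H^1).\<close>
definition bdry :: "(complex \<Rightarrow> complex) \<Rightarrow> real \<Rightarrow> complex" where
  "bdry F t = Lim (at_left (1::real)) (\<lambda>r. F (complex_of_real r * cis t))"

definition hardy1_norm :: "(complex \<Rightarrow> complex) \<Rightarrow> real" where
  "hardy1_norm F = (1 / (2*pi)) * (LINT t:{-pi..pi}|lebesgue. cmod (bdry F t))"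

text \<open>Lambda_n(E) = sup over the unit ball of H^1 of
  |(1/(2 pi i)) \<integral>_E F(\<zeta>) conj(\<zeta>)^n d\<zeta>|, with \<zeta> = e^{it}, d\<zeta> = i e^{it} dt.\<close>
definition Lambda :: "int \<Rightarrow> complex set \<Rightarrow> real" where
  "Lambda n E = Sup {cmod ((1 / (2 * complex_of_real pi * \<i>)) *
       (LINT t:{-pi..pi}|lebesgue.
          indicator E (cis t) * bdry F t * (cnj (cis t)) powi n * (\<i> * cis t))) |
     F. F \<in> hardy1 \<and> hardy1_norm F \<le> 1}"

text \<open>Fejer kernel (the removable singularities at x \<in> 2 pi Z are a null set).\<close>
definition fejer :: "nat \<Rightarrow> real \<Rightarrow> real" where
  "fejer n x = (sin (real n * x / 2))\<^sup>2 / (real n * (sin (x / 2))\<^sup>2)"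

end

theory Submission
  imports Defs
begin


definition K :: "nat \<Rightarrow> real \<Rightarrow> real" where
  "K n x = (cmod (\<Sum>k<n. cis (real k * x)))\<^sup>2 / real n"

lemma cis_minus_one_sq: "(cmod (cis x - 1))\<^sup>2 = 4 * (sin (x/2))\<^sup>2"
proof -
  have "(cmod (cis x - 1))\<^sup>2 = (cos x - 1)\<^sup>2 + (sin x)\<^sup>2"
    by (simp add: cmod_def)
  also have "\<dots> = 2 - 2 * cos x" by (simp add: power2_eq_square algebra_simps sin_squared_eq)
  also have "cos x = 1 - 2 * (sin (x/2))\<^sup>2" using cos_double_sin[of "x/2"] by simp
  finally show ?thesis by simp
qed

lemma geom_cis: "(\<Sum>k<n. cis (real k * x)) * (cis x - 1) = cis (real n * x) - 1"
proof (induction n)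
  case 0 then show ?case by simp
next
  case (Suc n)
  have "(\<Sum>k<Suc n. cis (real k * x)) * (cis x - 1) =
     (\<Sum>k<n. cis (real k * x)) * (cis x - 1) + cis (real n * x) * (cis x - 1)"
    by (simp add: algebra_simps)
  also have "\<dots> = cis (real (Suc n) * x) - 1"
    using Suc by (simp add: algebra_simps cis_mult distrib_right)
  finally show ?case .
qed

lemma fejer_le_K: fixes n :: nat and x :: real
  assumes "n \<ge> 1" shows "fejer n x \<le> K n x"
proof (cases "sin (x/2) = 0")
  case True then show ?thesis by (simp add: fejer_def K_def)
next
  case False
  have nz: "cmod (cis x - 1) \<noteq> 0" using cis_minus_one_sq[of x] False by auto
  have "cmod (\<Sum>k<n. cis (real k * x)) * cmod (cis x - 1) = cmod (cis (real n * x) - 1)"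
    using geom_cis[where n=n and x=x] by (metis norm_mult)
  then have "(cmod (\<Sum>k<n. cis (real k * x)))\<^sup>2 * (cmod (cis x - 1))\<^sup>2 = (cmod (cis (real n * x) - 1))\<^sup>2"
    by (metis power_mult_distrib)
  then have "(cmod (\<Sum>k<n. cis (real k * x)))\<^sup>2 * (4 * (sin (x/2))\<^sup>2) = 4 * (sin (real n * x/2))\<^sup>2"
    by (simp add: cis_minus_one_sq)
  then have "(cmod (\<Sum>k<n. cis (real k * x)))\<^sup>2 = (sin (real n * x/2))\<^sup>2 / (sin (x/2))\<^sup>2"
    using False by (simp add: field_simps)
  moreover have "fejer n x = ((sin (real n * x/2))\<^sup>2 / (sin (x/2))\<^sup>2) / real n"
    unfolding fejer_def by (simp add: divide_divide_eq_left mult.commute)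
  ultimately show ?thesis by (simp add: K_def)
qed



definition Fp :: "nat \<Rightarrow> real \<Rightarrow> complex \<Rightarrow> complex" where
  "Fp n \<alpha> z = (1 / of_nat n) * (\<Sum>k<n. (cis (-\<alpha>) * z)^k) * (\<Sum>k<n. cis (real k * \<alpha>) * z^(n-1-k))"

lemma Fp_cis:
  fixes n :: nat assumes "n \<ge> 1"
  shows "Fp n \<alpha> (cis t) = of_real (K n (t - \<alpha>)) * cis (real (n-1) * t)"
proof -
  define u where "u = (\<Sum>k<n. cis (real k * (t - \<alpha>)))"
  have 1: "(\<Sum>k<n. (cis (-\<alpha>) * cis t)^k) = u"
    unfolding u_def by (intro sum.cong refl) (simp add: cis_mult Complex.DeMoivre algebra_simps)
  have "(\<Sum>k<n. cis (real k * \<alpha>) * cis t^(n-1-k)) = (\<Sum>k<n. cis (real (n-1) * t) * cis (-(real k * (t - \<alpha>))))"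
  proof (intro sum.cong refl)
    fix k assume "k \<in> {..<n}"
    then have "real (n-1-k) = real n - 1 - real k" using assms by (simp add: of_nat_diff)
    then show "cis (real k * \<alpha>) * cis t^(n-1-k) = cis (real (n-1) * t) * cis (-(real k * (t - \<alpha>)))"
      using assms by (simp add: cis_mult Complex.DeMoivre algebra_simps of_nat_diff)
  qed
  also have "\<dots> = cis (real (n-1) * t) * cnj u"
    unfolding u_def by (simp add: sum_distrib_left cis_cnj)
  finally have 2: "(\<Sum>k<n. cis (real k * \<alpha>) * cis t^(n-1-k)) = cis (real (n-1) * t) * cnj u" .
  have "Fp n \<alpha> (cis t) = (1 / of_nat n) * (u * cnj u) * cis (real (n-1) * t)"
    unfolding Fp_def 1 2 by (simp add: algebra_simps)
  also have "u * cnj u = of_real ((cmod u)\<^sup>2)" by (rule complex_norm_square[symmetric])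
  finally show ?thesis by (simp add: K_def u_def)
qed



lemma K_expand:
  "K n x = (\<Sum>j<n. \<Sum>k<n. cos ((real j - real k) * x)) / real n"
proof -
  define u where "u = (\<Sum>k<n. cis (real k * x))"
  have "u * cnj u = (\<Sum>j<n. \<Sum>k<n. cis (real j * x) * cis (- (real k * x)))"
    unfolding u_def by (simp add: cnj_sum cis_cnj sum_product)
  also have "\<dots> = (\<Sum>j<n. \<Sum>k<n. cis ((real j - real k) * x))"
    by (simp add: cis_mult algebra_simps)
  finally have "Re (u * cnj u) = (\<Sum>j<n. \<Sum>k<n. cos ((real j - real k) * x))"
    by (simp add: Re_sum)
  moreover have "Re (u * cnj u) = (cmod u)\<^sup>2"
    using complex_norm_square[of u] by (metis Re_complex_of_real)
  ultimately show ?thesis by (simp add: K_def u_def)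
qed

lemma cos_int_integral:
  fixes m :: int
  shows "((\<lambda>t. cos (real_of_int m * (t - \<alpha>))) has_integral (if m = 0 then 2*pi else 0)) {-pi..pi}"
proof (cases "m = 0")
  case True
  then show ?thesis using has_integral_const_real[of "1::real" "-pi" pi] by simp
next
  case False
  have d: "((\<lambda>t. sin (real_of_int m * (t - \<alpha>)) / real_of_int m) has_vector_derivative
          cos (real_of_int m * (t - \<alpha>))) (at t within {-pi..pi})" for t
    unfolding has_real_derivative_iff_has_vector_derivative[symmetric]
    using False by (auto intro!: derivative_eq_intros)
  have "((\<lambda>t. cos (real_of_int m * (t - \<alpha>))) has_integral
     (sin (real_of_int m * (pi - \<alpha>)) / real_of_int m - sin (real_of_int m * (-pi - \<alpha>)) / real_of_int m)) {-pi..pi}"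
    by (rule fundamental_theorem_of_calculus) (use d in auto)
  moreover have "sin (real_of_int m * (pi - \<alpha>)) = sin (real_of_int m * (-pi - \<alpha>))"
  proof -
    have "real_of_int m * (pi - \<alpha>) = real_of_int m * (-pi - \<alpha>) + 2 * pi * real_of_int m"
      by (simp add: algebra_simps)
    then show ?thesis by (simp add: sin_add)
  qed
  ultimately show ?thesis using False by simp
qed



lemma K_integral:
  fixes n :: nat assumes "n \<ge> 1"
  shows "((\<lambda>t. K n (t - \<alpha>)) has_integral 2*pi) {-pi..pi}"
proof -
  have "((\<lambda>t. (\<Sum>j<n. \<Sum>k<n. cos (real_of_int (int j - int k) * (t - \<alpha>))) / real n) has_integral
        (\<Sum>j<n. \<Sum>k<n. (if int j - int k = 0 then 2*pi else 0)) / real n) {-pi..pi}"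
    by (intro has_integral_divide has_integral_sum finite_lessThan cos_int_integral)
  moreover have "(\<Sum>j<n. \<Sum>k<n. (if int j - int k = 0 then 2*pi else 0)) = real n * (2*pi)"
  proof -
    have "(\<Sum>j<n. \<Sum>k<n. (if int j - int k = 0 then 2*pi else 0)) = (\<Sum>j<n. 2*pi::real)"
    proof (intro sum.cong refl)
      fix j assume j: "j \<in> {..<n}"
      have "(\<Sum>k<n. (if int j - int k = 0 then 2*pi else 0)) = (\<Sum>k<n. (if j = k then 2*pi else 0::real))"
        by (intro sum.cong refl) auto
      also have "\<dots> = 2*pi" using j by (simp add: sum.delta)
      finally show "(\<Sum>k<n. (if int j - int k = 0 then 2*pi else 0)) = (2*pi::real)" .
    qed
    then show ?thesis by simp
  qed
  ultimately show ?thesis using assms by (simp add: K_expand)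
qed

lemma K_cont: "continuous_on A (\<lambda>t. K n (t - \<alpha>))"
  unfolding K_def divide_inverse by (intro continuous_intros)

lemma K_nonneg: "K n x \<ge> 0" by (simp add: K_def)

lemma K_LINT:
  fixes n :: nat assumes "n \<ge> 1"
  shows "(LINT t:{-pi..pi}|lebesgue. K n (t - \<alpha>)) = 2*pi"
    "set_integrable lebesgue {-pi..pi} (\<lambda>t. K n (t - \<alpha>))"
proof -
  show i: "set_integrable lebesgue {-pi..pi} (\<lambda>t. K n (t - \<alpha>))"
    by (rule absolutely_integrable_continuous_real) (rule K_cont)
  show "(LINT t:{-pi..pi}|lebesgue. K n (t - \<alpha>)) = 2*pi"
    using set_lebesgue_integral_eq_integral(2)[OF i] K_integral[OF assms] by (simp add: integral_unique)
qed



lemma Fp_cont: "continuous_on A (Fp n \<alpha>)"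
  unfolding Fp_def by (intro continuous_intros)

lemma Fp_holo: "Fp n \<alpha> holomorphic_on A"
  unfolding Fp_def by (intro holomorphic_intros)

lemma bdry_Fp: "bdry (Fp n \<alpha>) t = Fp n \<alpha> (cis t)"
proof -
  have c: "isCont (\<lambda>r. Fp n \<alpha> (complex_of_real r * cis t)) 1"
    by (intro continuous_on_interior[of UNIV] continuous_on_compose2[OF Fp_cont[of UNIV]] continuous_intros) auto
  then have "((\<lambda>r. Fp n \<alpha> (complex_of_real r * cis t)) \<longlongrightarrow> Fp n \<alpha> (cis t)) (at 1)"
    by (simp add: isCont_def)
  then have "((\<lambda>r. Fp n \<alpha> (complex_of_real r * cis t)) \<longlongrightarrow> Fp n \<alpha> (cis t)) (at_left 1)"
    by (simp add: filterlim_at_split)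
  then show ?thesis unfolding bdry_def
    by (intro tendsto_Lim) (simp_all add: trivial_limit_at_left_real)
qed

lemma Fp_hardy1: "Fp n \<alpha> \<in> hardy1"
proof -
  have "bounded (Fp n \<alpha> ` cball 0 1)"
    by (intro compact_imp_bounded compact_continuous_image Fp_cont compact_cball)
  then obtain M where M: "M > 0" "\<And>z. z \<in> cball 0 1 \<Longrightarrow> cmod (Fp n \<alpha> z) \<le> M"
    by (auto simp: bounded_pos)
  have "(1 / (2*pi)) * (LINT t:{-pi..pi}|lebesgue. cmod (Fp n \<alpha> (complex_of_real r * cis t))) \<le> M"
    if r: "r \<in> {0..<1::real}" for r
  proof -
    have ai: "(\<lambda>t. cmod (Fp n \<alpha> (complex_of_real r * cis t))) absolutely_integrable_on {-pi..pi}"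
      by (intro absolutely_integrable_continuous_real continuous_on_compose2[OF Fp_cont[of UNIV]] continuous_intros) auto
    have "(LINT t:{-pi..pi}|lebesgue. cmod (Fp n \<alpha> (complex_of_real r * cis t)))
        = integral {-pi..pi} (\<lambda>t. cmod (Fp n \<alpha> (complex_of_real r * cis t)))"
      by (rule set_lebesgue_integral_eq_integral(2)[OF ai])
    also have "\<dots> \<le> integral {-pi..pi} (\<lambda>t. M)"
    proof (rule integral_le)
      show "(\<lambda>t. cmod (Fp n \<alpha> (complex_of_real r * cis t))) integrable_on {-pi..pi}"
        by (rule set_lebesgue_integral_eq_integral(1)[OF ai])
      show "(\<lambda>t. M) integrable_on {-pi..pi}" by (rule integrable_const_ivl)
      fix t show "cmod (Fp n \<alpha> (complex_of_real r * cis t)) \<le> M"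
        using r by (intro M(2)) (simp add: norm_mult)
    qed
    also have "\<dots> = 2 * pi * M" by simp
    finally show ?thesis by (simp add: field_simps)
  qed
  then show ?thesis unfolding hardy1_def using Fp_holo by blast
qed

lemma Fp_norm:
  fixes n :: nat assumes "n \<ge> 1"
  shows "hardy1_norm (Fp n \<alpha>) \<le> 1"
  unfolding hardy1_norm_def bdry_Fp Fp_cis[OF assms]
  by (simp add: norm_mult K_nonneg K_LINT[OF assms])



lemma Fp_elem:
  fixes n :: nat assumes "n \<ge> 1"
  shows "cmod ((1 / (2 * complex_of_real pi * \<i>)) *
       (LINT t:{-pi..pi}|lebesgue.
          indicator E (cis t) * bdry (Fp n \<alpha>) t * (cnj (cis t)) powi (int n) * (\<i> * cis t)))
     = \<bar>LINT t:{-pi..pi}|lebesgue. indicator E (cis t) * K n (t - \<alpha>)\<bar> / (2*pi)"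
proof -
  have pw: "indicator E (cis t) * bdry (Fp n \<alpha>) t * (cnj (cis t)) powi (int n) * (\<i> * cis t)
      = \<i> * complex_of_real (indicator E (cis t) * K n (t - \<alpha>))" for t
  proof -
    have "cis (real (n - 1) * t) * cis (- t) ^ n * cis t = 1"
      using assms by (simp add: Complex.DeMoivre cis_mult of_nat_diff algebra_simps)
    then show ?thesis
      by (simp add: bdry_Fp Fp_cis[OF assms] power_int_of_nat cis_cnj split: split_indicator)
         (simp add: algebra_simps)
  qed
  show ?thesis
    unfolding pw set_integral_mult_right set_integral_complex_of_real
    by (simp add: norm_mult norm_divide)
qed

lemma lower_bound:
  fixes n :: nat assumes "n \<ge> 1" and S: "cis -` E \<in> sets lebesgue"
  shows "(LINT t:{-pi..pi}|lebesgue. indicator E (cis t) * fejer n (t - \<alpha>))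
     \<le> (LINT t:{-pi..pi}|lebesgue. indicator E (cis t) * K n (t - \<alpha>))"
proof -
  have "set_integrable lebesgue ({-pi..pi} \<inter> cis -` E) (\<lambda>t. K n (t - \<alpha>))"
    by (rule set_integrable_subset[OF K_LINT(2)[OF assms(1)]]) (use S in auto)
  then have int: "integrable lebesgue (\<lambda>t. indicator {-pi..pi} t *\<^sub>R (indicator E (cis t) * K n (t - \<alpha>)))"
    unfolding set_integrable_def
  proof -
    assume a: "integrable lebesgue (\<lambda>x. indicat_real ({- pi..pi} \<inter> cis -` E) x *\<^sub>R K n (x - \<alpha>))"
    have "(\<lambda>t. indicator {-pi..pi} t *\<^sub>R (indicator E (cis t) * K n (t - \<alpha>))) =
       (\<lambda>x. indicat_real ({- pi..pi} \<inter> cis -` E) x *\<^sub>R K n (x - \<alpha>))"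
      by (auto simp: fun_eq_iff split: split_indicator)
    then show ?thesis using a by simp
  qed
  show ?thesis
    unfolding set_lebesgue_integral_def
    by (rule integral_mono'[OF int])
       (auto split: split_indicator intro: fejer_le_K[OF assms(1)] K_nonneg)
qed



definition Qs :: "nat \<Rightarrow> real set" where
  "Qs j = {x. x \<in> \<rat> \<and> 1 - 1 / (real j + 2) < x \<and> x < 1}"

definition rk :: "nat \<Rightarrow> real" where "rk k = 1 - 1 / (real k + 2)"

lemma rk_Qs: "j < k \<Longrightarrow> rk k \<in> Qs j"
  unfolding rk_def Qs_def by (auto simp: frac_le divide_strict_left_mono)

lemma rk_lim: "rk \<longlonglongrightarrow> 1"
proof -
  have "(\<lambda>k. 1 / (real k + 2)) \<longlonglongrightarrow> 0"
    by real_asymp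
  then show ?thesis unfolding rk_def using tendsto_diff[OF tendsto_const[of 1]] by force
qed



lemma Qs_sub: "Qs j \<subseteq> {0<..<1}"
proof
  fix x assume "x \<in> Qs j"
  then have x: "1 - 1 / (real j + 2) < x" "x < 1" unfolding Qs_def by auto
  have "1 / (real j + 2) \<le> 1/2" by (simp add: frac_le)
  then have "0 < x" using x by linarith
  then show "x \<in> {0<..<1}" using x by auto
qed

lemma conv_imp:
  fixes f :: "real \<Rightarrow> complex"
  assumes "(f \<longlongrightarrow> L) (at_left 1)"
  shows "\<exists>j. \<forall>p\<in>Qs j. \<forall>q\<in>Qs j. cmod (f p - f q) \<le> 1 / (real m + 1)"
proof -
  define e where "e = 1 / (real m + 1)"
  have e: "e > 0" unfolding e_def by simp
  have "eventually (\<lambda>r. dist (f r) L < e/2) (at_left 1)"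
    using tendstoD[OF assms, of "e/2"] e by simp
  then obtain b where b: "b < 1" "\<And>y. b < y \<Longrightarrow> y < 1 \<Longrightarrow> dist (f y) L < e/2"
    unfolding eventually_at_left_field by auto
  obtain j :: nat where j: "1 / (1 - b) < real j" using reals_Archimedean2 by blast
  have "1 / (real j + 2) < 1 - b"
  proof -
    have "1 / (real j + 2) < 1 / (1 / (1 - b))"
      using j b by (intro divide_strict_left_mono) (auto simp: field_simps)
    then show ?thesis by simp
  qed
  then have jb: "\<And>p. p \<in> Qs j \<Longrightarrow> b < p \<and> p < 1" unfolding Qs_def by auto
  show ?thesis
  proof (intro exI ballI)
    fix p q assume p: "p \<in> Qs j" and q: "q \<in> Qs j"
    have "cmod (f p - f q) = dist (f p) (f q)" by (simp add: dist_norm)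
    also have "\<dots> \<le> dist (f p) L + dist (f q) L" by (rule dist_triangle2)
    also have "\<dots> < e"
    proof -
      have "dist (f p) L < e/2" using b(2) jb[OF p] by blast
      moreover have "dist (f q) L < e/2" using b(2) jb[OF q] by blast
      ultimately show ?thesis by linarith
    qed
    finally show "cmod (f p - f q) \<le> 1 / (real m + 1)" unfolding e_def by simp
  qed
qed

lemma conv_from:
  fixes f :: "real \<Rightarrow> complex"
  assumes cont: "continuous_on {0<..<1} f"
    and H: "\<forall>m::nat. \<exists>j. \<forall>p\<in>Qs j. \<forall>q\<in>Qs j. cmod (f p - f q) \<le> 1 / (real m + 1)"
  shows "\<exists>L. (f \<longlongrightarrow> L) (at_left 1)"
proof -
  have small: "\<exists>m::nat. 1 / (real m + 1) < e" if "e > 0" for e :: real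
  proof -
    obtain m :: nat where "1 / e < real m" using reals_Archimedean2 by blast
    then have "1 / e < real m + 1" by simp
    then have "1 / (real m + 1) < 1 / (1 / e)" using that
      by (intro divide_strict_left_mono) (auto simp: field_simps)
    then show ?thesis by auto
  qed
  have "Cauchy (\<lambda>k. f (rk k))"
  proof (rule CauchyI)
    fix e :: real assume "e > 0"
    then obtain m :: nat where m: "1 / (real m + 1) < e" using small by blast
    obtain j where j: "\<forall>p\<in>Qs j. \<forall>q\<in>Qs j. cmod (f p - f q) \<le> 1 / (real m + 1)" using H by blast
    show "\<exists>M. \<forall>a\<ge>M. \<forall>b\<ge>M. norm (f (rk a) - f (rk b)) < e"
    proof (intro exI allI impI)
      fix a b assume "Suc j \<le> a" "Suc j \<le> b"
      then have "rk a \<in> Qs j" "rk b \<in> Qs j" by (auto intro: rk_Qs)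
      then show "norm (f (rk a) - f (rk b)) < e" using j m by fastforce
    qed
  qed
  then obtain L where L: "(\<lambda>k. f (rk k)) \<longlonglongrightarrow> L"
    unfolding Cauchy_convergent_iff convergent_def by blast
  have "(f \<longlongrightarrow> L) (at_left 1)"
  proof (rule tendstoI)
    fix e :: real assume "e > 0"
    then obtain m :: nat where m: "1 / (real m + 1) < e/2" using small[of "e/2"] by auto
    define \<epsilon> where "\<epsilon> = 1 / (real m + 1)"
    have \<epsilon>: "\<epsilon> > 0" unfolding \<epsilon>_def by simp
    obtain j where j: "\<forall>p\<in>Qs j. \<forall>q\<in>Qs j. cmod (f p - f q) \<le> \<epsilon>" using H unfolding \<epsilon>_def by blast
    have a1: "1 - 1 / (real j + 2) < 1" by simp
    show "eventually (\<lambda>r. dist (f r) L < e) (at_left 1)"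
      using eventually_at_left_real[OF a1]
    proof (rule eventually_mono)
      fix r assume r: "r \<in> {1 - 1 / (real j + 2)<..<1}"
      have r01: "r \<in> {0<..<1}" using r Qs_sub
      proof -
        have "1 / (real j + 2) \<le> 1/2" by (simp add: frac_le)
        moreover have "1 - 1 / (real j + 2) < r" using r by simp
        ultimately have "0 < r" by linarith
        then show ?thesis using r by auto
      qed
      have "isCont f r"
        using cont r01 by (simp add: continuous_on_eq_continuous_at)
      then obtain \<delta> where \<delta>: "\<delta> > 0" "\<And>y. dist y r < \<delta> \<Longrightarrow> dist (f y) (f r) < \<epsilon>"
        unfolding continuous_at_eps_delta using \<epsilon> by blast
      obtain p where p: "p \<in> \<rat>" "max (1 - 1 / (real j + 2)) (r - \<delta>) < p" "p < r"
        using Rats_dense_in_real[of "max (1 - 1 / (real j + 2)) (r - \<delta>)" r] r \<delta> by auto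
      have pQ: "p \<in> Qs j" using p r unfolding Qs_def by auto
      have d1: "dist (f r) (f p) < \<epsilon>" using \<delta>(2)[of p] p by (simp add: dist_commute dist_real_def)
      have "dist (f p) L \<le> \<epsilon>"
      proof (rule tendsto_upperbound)
        show "((\<lambda>k. dist (f p) (f (rk k))) \<longlongrightarrow> dist (f p) L) sequentially"
          by (intro tendsto_intros L)
        show "eventually (\<lambda>k. dist (f p) (f (rk k)) \<le> \<epsilon>) sequentially"
          unfolding eventually_sequentially
          using j pQ rk_Qs by (auto simp: dist_norm intro!: exI[of _ "Suc j"])
      qed simp
      then have "dist (f r) L < 2 * \<epsilon>" using d1 dist_triangle[of "f r" L "f p"] by linarith
      then show "dist (f r) L < e" using m unfolding \<epsilon>_def by linarith
    qed
  qed
  then show ?thesis by blast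
qed



lemma slice_cont:
  assumes h: "F holomorphic_on ball 0 1" and p: "0 \<le> p" "p < 1"
  shows "continuous_on UNIV (\<lambda>t. F (complex_of_real p * cis t))"
  by (rule continuous_on_compose2[OF holomorphic_on_imp_continuous_on[OF h]])
     (use p in \<open>auto intro!: continuous_intros simp: norm_mult\<close>)

lemma slice_meas:
  assumes h: "F holomorphic_on ball 0 1" and p: "0 \<le> p" "p < 1"
  shows "(\<lambda>t. F (complex_of_real p * cis t)) \<in> borel_measurable lebesgue"
  using borel_measurable_continuous_onI[OF slice_cont[OF assms]] by (simp add: measurable_completion)

lemma radial_cont:
  assumes h: "F holomorphic_on ball 0 1"
  shows "continuous_on {0<..<1} (\<lambda>r. F (complex_of_real r * cis t))"
  by (rule continuous_on_compose2[OF holomorphic_on_imp_continuous_on[OF h]])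
     (auto intro!: continuous_intros simp: norm_mult)

definition Cset :: "(complex \<Rightarrow> complex) \<Rightarrow> real set" where
  "Cset F = {t. \<forall>m::nat. \<exists>j. \<forall>p\<in>Qs j. \<forall>q\<in>Qs j.
      cmod (F (complex_of_real p * cis t) - F (complex_of_real q * cis t)) \<le> 1 / (real m + 1)}"

lemma Cset_iff:
  assumes h: "F holomorphic_on ball 0 1"
  shows "t \<in> Cset F \<longleftrightarrow> (\<exists>L. ((\<lambda>r. F (complex_of_real r * cis t)) \<longlongrightarrow> L) (at_left 1))"
proof
  assume "t \<in> Cset F"
  then show "\<exists>L. ((\<lambda>r. F (complex_of_real r * cis t)) \<longlongrightarrow> L) (at_left 1)"
    unfolding Cset_def by (intro conv_from radial_cont[OF h]) simp
next
  assume "\<exists>L. ((\<lambda>r. F (complex_of_real r * cis t)) \<longlongrightarrow> L) (at_left 1)"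
  then obtain L where "((\<lambda>r. F (complex_of_real r * cis t)) \<longlongrightarrow> L) (at_left 1)" by blast
  then show "t \<in> Cset F" unfolding Cset_def using conv_imp by blast
qed

lemma Cset_meas:
  assumes h: "F holomorphic_on ball 0 1"
  shows "Measurable.pred lebesgue (\<lambda>t. t \<in> Cset F)"
proof -
  have cQ: "countable (Qs j)" for j
    by (rule countable_subset[OF _ countable_rat]) (auto simp: Qs_def)
  have m: "Measurable.pred lebesgue (\<lambda>t. cmod (F (complex_of_real p * cis t) - F (complex_of_real q * cis t)) \<le> c)"
    if "p \<in> Qs j" "q \<in> Qs j" for p q j c
  proof -
    have "p \<in> {0<..<1}" "q \<in> {0<..<1}" using that Qs_sub[of j] by blast+
    then have [measurable]: "(\<lambda>t. F (complex_of_real p * cis t)) \<in> borel_measurable lebesgue"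
        "(\<lambda>t. F (complex_of_real q * cis t)) \<in> borel_measurable lebesgue"
      using slice_meas[OF h] by auto
    show ?thesis by measurable
  qed
  have imp: "Measurable.pred lebesgue (\<lambda>t. c \<longrightarrow> P t)" if "c \<Longrightarrow> Measurable.pred lebesgue P" for c P
    using that by (cases c) auto
  have rq: "(\<forall>p\<in>Qs j. P p) \<longleftrightarrow> (\<forall>\<rho>::rat. of_rat \<rho> \<in> Qs j \<longrightarrow> P (of_rat \<rho>))" for j P
    by (auto simp: Qs_def elim!: Rats_cases)
  show ?thesis unfolding Cset_def mem_Collect_eq rq
    by (intro pred_intros_countable imp m) 
qed



lemma rk_range: "0 \<le> rk k" "rk k < 1"
proof -
  have "1 / (real k + 2) \<le> 1/2" by (simp add: frac_le)
  then show "0 \<le> rk k" unfolding rk_def by linarith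
  show "rk k < 1" unfolding rk_def by simp
qed

lemma bdry_C:
  assumes h: "F holomorphic_on ball 0 1" and t: "t \<in> Cset F"
  shows "(\<lambda>k. F (complex_of_real (rk k) * cis t)) \<longlonglongrightarrow> bdry F t"
proof -
  obtain L where L: "((\<lambda>r. F (complex_of_real r * cis t)) \<longlongrightarrow> L) (at_left 1)"
    using Cset_iff[OF h] t by blast
  have b: "bdry F t = L" unfolding bdry_def
    by (rule tendsto_Lim[OF _ L]) (simp add: trivial_limit_at_left_real)
  have "filterlim rk (at_left 1) sequentially"
    by (rule tendsto_imp_filterlim_at_left[OF rk_lim]) (simp add: rk_range)
  from filterlim_compose[OF L this] show ?thesis unfolding b by (simp add: o_def)
qed

lemma bdry_notC:
  assumes h: "F holomorphic_on ball 0 1" and t: "t \<notin> Cset F"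
  shows "bdry F t = (THE L::complex. False)"
proof -
  have "(\<lambda>L. ((\<lambda>r. F (complex_of_real r * cis t)) \<longlongrightarrow> L) (at_left 1)) = (\<lambda>L. False)"
    using Cset_iff[OF h, of t] t by auto
  then show ?thesis unfolding bdry_def Topological_Spaces.Lim_def by simp
qed

lemma bdry_meas:
  assumes h: "F holomorphic_on ball 0 1"
  shows "bdry F \<in> borel_measurable lebesgue"
proof (rule borel_measurable_LIMSEQ_metric)
  define c0 where "c0 = (THE L::complex. False)"
  show "(\<lambda>k t. if t \<in> Cset F then F (complex_of_real (rk k) * cis t) else c0) k \<in> borel_measurable lebesgue" for k
  proof -
    note [measurable] = Cset_meas[OF h] slice_meas[OF h rk_range(1)[of k] rk_range(2)[of k]]
    show ?thesis by measurable
  qed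
  show "(\<lambda>k. (\<lambda>k t. if t \<in> Cset F then F (complex_of_real (rk k) * cis t) else c0) k t) \<longlonglongrightarrow> bdry F t" for t
    using bdry_C[OF h] bdry_notC[OF h] unfolding c0_def by (cases "t \<in> Cset F") auto
qed



lemma ident_meas_leb[measurable]: "(\<lambda>x::real. x) \<in> borel_measurable lebesgue"
  using id_borel_measurable_lebesgue by (simp add: id_def)

lemma bdry_int:
  assumes F: "F \<in> hardy1"
  shows "set_integrable lebesgue {-pi..pi} (bdry F)"
proof -
  from F have h: "F holomorphic_on ball 0 1" and
    "\<exists>B. \<forall>r\<in>{0..<1::real}.
        (1 / (2*pi)) * (LINT t:{-pi..pi}|lebesgue. cmod (F (complex_of_real r * cis t))) \<le> B"
    unfolding hardy1_def by auto
  then obtain B where B: "\<And>r. r \<in> {0..<1::real} \<Longrightarrow>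
        (1 / (2*pi)) * (LINT t:{-pi..pi}|lebesgue. cmod (F (complex_of_real r * cis t))) \<le> B" by blast
  define c0 where "c0 = (THE L::complex. False)"
  define g where "g k t = ennreal (indicator {-pi..pi} t * cmod (F (complex_of_real (rk k) * cis t)))" for k t
  have gm[measurable]: "g k \<in> borel_measurable lebesgue" for k
  proof -
    have [measurable]: "(\<lambda>t. cmod (F (complex_of_real (rk k) * cis t))) \<in> borel_measurable lebesgue"
      using slice_meas[OF h rk_range(1)[of k] rk_range(2)[of k]] by measurable
    have [measurable]: "(\<lambda>x::real. x) \<in> borel_measurable lebesgue"
      using id_borel_measurable_lebesgue by (simp add: id_def)
    show ?thesis unfolding g_def by measurable
  qed
  have gint: "integral\<^sup>N lebesgue (g k) \<le> ennreal (2*pi*B)" for k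
  proof -
    have ai: "(\<lambda>t. cmod (F (complex_of_real (rk k) * cis t))) absolutely_integrable_on {-pi..pi}"
      by (intro absolutely_integrable_continuous_real continuous_on_compose2[OF continuous_on_norm_id]
          continuous_on_subset[OF slice_cont[OF h rk_range(1)[of k] rk_range(2)[of k]]]) auto
    then have "integrable lebesgue (\<lambda>t. indicator {-pi..pi} t * cmod (F (complex_of_real (rk k) * cis t)))"
      unfolding set_integrable_def by simp
    then have "integral\<^sup>N lebesgue (g k) = ennreal (LINT t:{-pi..pi}|lebesgue. cmod (F (complex_of_real (rk k) * cis t)))"
      unfolding g_def set_lebesgue_integral_def
      by (subst nn_integral_eq_integral) auto
    also have "\<dots> \<le> ennreal (2*pi*B)"
    proof (rule ennreal_leI)
      have "(1 / (2*pi)) * (LINT t:{-pi..pi}|lebesgue. cmod (F (complex_of_real (rk k) * cis t))) \<le> B"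
        using B[of "rk k"] rk_range[of k] by auto
      then show "(LINT t:{-pi..pi}|lebesgue. cmod (F (complex_of_real (rk k) * cis t))) \<le> 2*pi*B"
        by (simp add: field_simps)
    qed
    finally show ?thesis .
  qed
  have pw: "ennreal (norm (indicator {-pi..pi} t *\<^sub>R bdry F t))
      \<le> liminf (\<lambda>k. g k t) + ennreal (indicator {-pi..pi} t * cmod c0)" for t
  proof (cases "t \<in> {-pi..pi}")
    case False then show ?thesis by simp
  next
    case tin: True
    show ?thesis
    proof (cases "t \<in> Cset F")
      case True
      have "(\<lambda>k. g k t) \<longlonglongrightarrow> ennreal (cmod (bdry F t))"
        unfolding g_def using tin by (simp add: tendsto_ennrealI tendsto_norm bdry_C[OF h True])
      then have "liminf (\<lambda>k. g k t) = ennreal (cmod (bdry F t))"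
        by (simp add: lim_imp_Liminf)
      then show ?thesis using tin by (simp add: add_increasing2)
    next
      case False
      then show ?thesis using tin bdry_notC[OF h False] unfolding c0_def by (simp add: add_increasing)
    qed
  qed
  have "(\<integral>\<^sup>+ t. ennreal (norm (indicator {-pi..pi} t *\<^sub>R bdry F t)) \<partial>lebesgue)
      \<le> (\<integral>\<^sup>+ t. liminf (\<lambda>k. g k t) + ennreal (indicator {-pi..pi} t * cmod c0) \<partial>lebesgue)"
    by (rule nn_integral_mono) (rule pw)
  also have "\<dots> = (\<integral>\<^sup>+ t. liminf (\<lambda>k. g k t) \<partial>lebesgue) + (\<integral>\<^sup>+ t. ennreal (indicator {-pi..pi} t * cmod c0) \<partial>lebesgue)"
  proof (rule nn_integral_add)
    show "(\<lambda>x. liminf (\<lambda>k. g k x)) \<in> borel_measurable lebesgue"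
      by (rule borel_measurable_liminf) (rule gm)
    show "(\<lambda>x. ennreal (indicat_real {- pi..pi} x * cmod c0)) \<in> borel_measurable lebesgue"
      by (intro measurable_compose[OF _ measurable_ennreal] borel_measurable_times borel_measurable_indicator borel_measurable_const) simp
  qed
  also have "\<dots> \<le> ennreal (2*pi*B) + ennreal (cmod c0) * ennreal (2*pi)"
  proof (rule add_mono)
    have "(\<integral>\<^sup>+ t. liminf (\<lambda>k. g k t) \<partial>lebesgue) \<le> liminf (\<lambda>k. integral\<^sup>N lebesgue (g k))"
      by (rule nn_integral_liminf) simp
    also have "\<dots> \<le> limsup (\<lambda>k. integral\<^sup>N lebesgue (g k))"
      by (rule Liminf_le_Limsup) simp
    also have "\<dots> \<le> ennreal (2*pi*B)"
      by (rule Limsup_bounded) (simp add: gint)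
    finally show "(\<integral>\<^sup>+ t. liminf (\<lambda>k. g k t) \<partial>lebesgue) \<le> ennreal (2*pi*B)" .
    have "(\<integral>\<^sup>+ t. ennreal (indicator {-pi..pi} t * cmod c0) \<partial>lebesgue)
        = (\<integral>\<^sup>+ t \<in> {-pi..pi}. ennreal (cmod c0) \<partial>lebesgue)"
      by (intro nn_integral_cong) (auto split: split_indicator)
    also have "\<dots> = ennreal (cmod c0) * ennreal (2*pi)"
      by (subst nn_integral_cmult_indicator) auto
    finally show "(\<integral>\<^sup>+ t. ennreal (indicator {-pi..pi} t * cmod c0) \<partial>lebesgue) \<le> ennreal (cmod c0) * ennreal (2*pi)"
      by simp
  qed
  also have "\<dots> < \<infinity>" by (simp add: ennreal_mult_less_top)
  finally have fin: "(\<integral>\<^sup>+ t. ennreal (norm (indicator {-pi..pi} t *\<^sub>R bdry F t)) \<partial>lebesgue) < \<infinity>" .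
  show ?thesis unfolding set_integrable_def
    by (rule integrableI_bounded[OF _ fin]) (use bdry_meas[OF h] in measurable)
qed



lemma elem_le1:
  assumes F: "F \<in> hardy1" and N: "hardy1_norm F \<le> 1"
  shows "cmod ((1 / (2 * complex_of_real pi * \<i>)) *
       (LINT t:{-pi..pi}|lebesgue.
          indicator E (cis t) * bdry F t * (cnj (cis t)) powi n * (\<i> * cis t))) \<le> 1"
proof -
  define g where "g t = indicator E (cis t) * bdry F t * (cnj (cis t)) powi n * (\<i> * cis t)" for t
  have ng: "cmod (g t) = indicator E (cis t) * cmod (bdry F t)" for t
    unfolding g_def by (simp add: norm_mult norm_power_int split: split_indicator)
  have X: "cmod (LINT t:{-pi..pi}|lebesgue. g t) \<le> 2 * pi"
  proof (cases "set_integrable lebesgue {-pi..pi} g")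
    case True
    have bi: "set_integrable lebesgue {-pi..pi} (\<lambda>t. cmod (bdry F t))"
      using set_integrable_norm[OF bdry_int[OF F]] .
    have "cmod (LINT t:{-pi..pi}|lebesgue. g t) \<le> (LINT t:{-pi..pi}|lebesgue. cmod (g t))"
      by (rule set_integral_norm_bound[OF True])
    also have "\<dots> \<le> (LINT t:{-pi..pi}|lebesgue. cmod (bdry F t))"
      by (rule set_integral_mono[OF set_integrable_norm[OF True] bi]) (simp add: ng split: split_indicator)
    also have "\<dots> \<le> 2 * pi" using N unfolding hardy1_norm_def by (simp add: field_simps)
    finally show ?thesis .
  next
    case False
    then have "(LINT t:{-pi..pi}|lebesgue. g t) = 0"
      unfolding set_integrable_def set_lebesgue_integral_def by (rule not_integrable_integral_eq)
    then show ?thesis by simp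
  qed
  have "cmod ((1 / (2 * complex_of_real pi * \<i>)) * (LINT t:{-pi..pi}|lebesgue. g t))
      = cmod (LINT t:{-pi..pi}|lebesgue. g t) / (2 * pi)"
    by (simp add: norm_mult norm_divide)
  also have "\<dots> \<le> 1" using X by (simp add: field_simps)
  finally show ?thesis unfolding g_def .
qed

theorem mainTheorem5:
  fixes E :: "complex set" and n :: nat and \<alpha> :: real
  assumes "E \<subseteq> sphere 0 1"
    and "cis -` E \<in> sets lebesgue"
    and "n \<ge> 1"
    and "\<alpha> \<in> {-pi..pi}"
  shows "Lambda (int n) E \<ge>
           (1 / (2*pi)) * (LINT t:{-pi..pi}|lebesgue. indicator E (cis t) * fejer n (t - \<alpha>))"
proof -
  define S where "S = {cmod ((1 / (2 * complex_of_real pi * \<i>)) *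
       (LINT t:{-pi..pi}|lebesgue.
          indicator E (cis t) * bdry F t * (cnj (cis t)) powi (int n) * (\<i> * cis t))) |
     F. F \<in> hardy1 \<and> hardy1_norm F \<le> 1}"
  have L: "Lambda (int n) E = Sup S" unfolding Lambda_def S_def ..
  have bdd: "bdd_above S" unfolding S_def bdd_above_def using elem_le1 by blast
  have mem: "cmod ((1 / (2 * complex_of_real pi * \<i>)) *
       (LINT t:{-pi..pi}|lebesgue.
          indicator E (cis t) * bdry (Fp n \<alpha>) t * (cnj (cis t)) powi (int n) * (\<i> * cis t))) \<in> S"
    unfolding S_def using Fp_hardy1 Fp_norm[OF assms(3)] by blast
  have "(1 / (2*pi)) * (LINT t:{-pi..pi}|lebesgue. indicator E (cis t) * fejer n (t - \<alpha>))
      \<le> (1 / (2*pi)) * (LINT t:{-pi..pi}|lebesgue. indicator E (cis t) * K n (t - \<alpha>))"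
    using lower_bound[OF assms(3) assms(2), of \<alpha>] by (simp add: divide_right_mono)
  also have "\<dots> \<le> \<bar>LINT t:{-pi..pi}|lebesgue. indicator E (cis t) * K n (t - \<alpha>)\<bar> / (2*pi)"
    using divide_right_mono[OF abs_ge_self, of "2*pi" "LINT t:{-pi..pi}|lebesgue. indicator E (cis t) * K n (t - \<alpha>)"]
    by simp
  also have "\<dots> = cmod ((1 / (2 * complex_of_real pi * \<i>)) *
       (LINT t:{-pi..pi}|lebesgue.
          indicator E (cis t) * bdry (Fp n \<alpha>) t * (cnj (cis t)) powi (int n) * (\<i> * cis t)))"
    by (rule Fp_elem[OF assms(3), symmetric])
  also have "\<dots> \<le> Sup S" by (rule cSup_upper[OF mem bdd])
  finally show ?thesis unfolding L .
qed


end
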